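(* Assume the interventions are soft, one on each latent node, in the setting of the context. For each node $j\in[q]$ let $c_j=-1$ if $\operatorname{rank}M[j]\neq\operatorname{rank}(M[j]\,|\,b[j])$, and $c_j=|\mathrm{ch}(j)|-\operatorname{rank}M[j]$ otherwise. Then the ideal $\mathcal{I}$ has dimension $\dim\mathcal{I}=-1$ if $c_j=-1$ for some $j\in[q]$, and $\dim\mathcal{I}=\sum_{j=1}^q c_j$ otherwise.
   Context: Setting: $p,q\ge2$; a DAG $\mathcal{G}$ on $[q]$ with $\mathrm{ch}(j)=\{i: j\to i\in\mathcal{G}\}$ and $\mathrm{de}(j)$ the set of nodes $i\ne j$ reachable from $j$ by a directed path. True parameters: a generic $\widetilde F\in\mathbb{R}^{p\times q}$, a matrix $\widetilde\Lambda^{(0)}$ with $(\widetilde\Lambda^{(0)})_{i,j}\ne0$ iff $j\to i\in\mathcal{G}$ with generic nonzero entries, and for $k\in[q]$ a matrix $\widetilde\Lambda^{(k)}$ (soft intervention on node $k$) agreeing with $\widetilde\Lambda^{(0)}$ except in row $k$, whose nonzero entries are generic, supported on the same positions, and all differ from those of $\widetilde\Lambda^{(0)}$. Set $A^{(k)}=\widetilde F(I-\widetilde\Lambda^{(k)})^{-1}$ for $k=0,\dots,q$, and $\Delta^{(k)}=(I-\widetilde\Lambda^{(k)})^{-1}-(I-\widetilde\Lambda^{(0)})^{-1}$. Let $\mathcal{I}$ be the ideal generated by the entries of $F-A^{(k)}(I-\Lambda^{(k)})$, $k=0,\dots,q$, in the polynomial ring whose indeterminates are the entries $f_{\ell,j}$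 of $F$ ($\ell\in[p],j\in[q]$), $\lambda^{(0)}_{i,j}$ for each edge $j\to i$ of $\mathcal{G}$, and $\lambda^{(k)}_{k,j}$ for each edge $j\to k$ of $\mathcal{G}$; here $\Lambda^{(0)}$ has entries $\lambda^{(0)}_{i,j}$ on edges and $0$ elsewhere, and $\Lambda^{(k)}$ equals $\Lambda^{(0)}$ with row $k$ replaced by the $\lambda^{(k)}_{k,j}$. $\dim\mathcal{I}$ is the dimension of the affine variety of $\mathcal{I}$ (equal to $-1$ if empty). For $j\in[q]$, $M[j]$ is the matrix with rows indexed by $k\in\mathrm{de}(j)\setminus\mathrm{ch}(j)$, columns by $i\in\mathrm{ch}(j)$, and entries $\Delta^{(k)}_{k,i}$; $b[j]$ is the column vector indexed by $k\in\mathrm{de}(j)\setminus\mathrm{ch}(j)$ with entries $\Delta^{(k)}_{k,j}$; $(M[j]\,|\,b[j])$ is the augmented matrix. *)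

theory Defs
  imports "HOL-Analysis.Analysis"
begin

inductive poly_fun :: "('a::euclidean_space \<Rightarrow> real) \<Rightarrow> bool" where
  pf_const: "poly_fun (\<lambda>x. c)"
| pf_lin: "poly_fun (\<lambda>x. inner b x)"
| pf_add: "poly_fun f \<Longrightarrow> poly_fun g \<Longrightarrow> poly_fun (\<lambda>x. f x + g x)"
| pf_mult: "poly_fun f \<Longrightarrow> poly_fun g \<Longrightarrow> poly_fun (\<lambda>x. f x * g x)"

definition generically_on :: "'a::euclidean_space set \<Rightarrow> ('a \<Rightarrow> bool) \<Rightarrow> bool" where
  "generically_on V Q \<longleftrightarrow>
     (\<exists>P. poly_fun P \<and> (\<exists>x\<in>V. P x \<noteq> 0) \<and> (\<forall>x\<in>V. P x \<noteq> 0 \<longrightarrow> Q x))"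

text \<open>Graph: (j,i) \<in> E means the edge j \<rightarrow> i.\<close>
definition ch :: "('q \<times> 'q) set \<Rightarrow> 'q \<Rightarrow> 'q set" where
  "ch E j = {i. (j, i) \<in> E}"

definition de :: "('q \<times> 'q) set \<Rightarrow> 'q \<Rightarrow> 'q set" where
  "de E j = {i. i \<noteq> j \<and> (j, i) \<in> E\<^sup>+}"

definition lam_int :: "real^'q^'q \<Rightarrow> real^'q^'q \<Rightarrow> 'q \<Rightarrow> real^'q^'q" where
  "lam_int L0 R k = (\<chi> i. if i = k then R $ k else L0 $ i)"

definition edge_supported :: "('q \<times> 'q) set \<Rightarrow> real^'q^'q \<Rightarrow> bool" where
  "edge_supported E L \<longleftrightarrow> (\<forall>i j. (j, i) \<notin> E \<longrightarrow> L $ i $ j = 0)"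

text \<open>Parameter space: (F, Lambda^(0), R) with the relevant supports; row k of R
  holds the entries lambda^(k)_{k,j}.\<close>
definition param_space :: "('q::finite \<times> 'q) set \<Rightarrow> ((real^'q^'p) \<times> (real^'q^'q) \<times> (real^'q^'q)) set" where
  "param_space E = {(F, L0, R). edge_supported E L0 \<and> edge_supported E R}"

definition A_mat :: "real^'q^'p \<Rightarrow> real^'q^'q \<Rightarrow> real^'q^'p" where
  "A_mat F L = F ** matrix_inv (mat 1 - L)"

text \<open>The (real points of the) affine variety of the ideal I, for true parameters
  (Ft, L0t, Rt). All generators are affine-linear in the unknowns.\<close>
definition ideal_variety ::
  "('q::finite \<times> 'q) set \<Rightarrow> real^'q^'p \<Rightarrow> real^'q^'q \<Rightarrow> real^'q^'q
     \<Rightarrow> ((real^'q^'p) \<times> (real^'q^'q) \<times> (real^'q^'q)) set" where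
  "ideal_variety E Ft L0t Rt =
     {(F, L0, R). (F, L0, R) \<in> param_space E
        \<and> F = A_mat Ft L0t ** (mat 1 - L0)
        \<and> (\<forall>k. F = A_mat Ft (lam_int L0t Rt k) ** (mat 1 - lam_int L0 R k))}"

definition Delta :: "real^'q^'q \<Rightarrow> real^'q^'q \<Rightarrow> 'q \<Rightarrow> real^'q^'q" where
  "Delta L0t Rt k = matrix_inv (mat 1 - lam_int L0t Rt k) - matrix_inv (mat 1 - L0t)"

text \<open>M[j] and (M[j] | b[j]), padded with zero rows/columns to q x q matrices
  (row k, column i; the column of b[j] is placed at index j, which is not a child of j).\<close>
definition M_mat :: "('q::finite \<times> 'q) set \<Rightarrow> real^'q^'q \<Rightarrow> real^'q^'q \<Rightarrow> 'q \<Rightarrow> real^'q^'q" where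
  "M_mat E L0t Rt j = (\<chi> k i. if k \<in> de E j - ch E j \<and> i \<in> ch E j
                                then Delta L0t Rt k $ k $ i else 0)"

definition Mb_mat :: "('q::finite \<times> 'q) set \<Rightarrow> real^'q^'q \<Rightarrow> real^'q^'q \<Rightarrow> 'q \<Rightarrow> real^'q^'q" where
  "Mb_mat E L0t Rt j = (\<chi> k i. if k \<in> de E j - ch E j \<and> (i \<in> ch E j \<or> i = j)
                                 then Delta L0t Rt k $ k $ i else 0)"

definition c_val :: "('q::finite \<times> 'q) set \<Rightarrow> real^'q^'q \<Rightarrow> real^'q^'q \<Rightarrow> 'q \<Rightarrow> int" where
  "c_val E L0t Rt j =
     (if rank (M_mat E L0t Rt j) \<noteq> rank (Mb_mat E L0t Rt j) then -1
      else int (card (ch E j)) - int (rank (M_mat E L0t Rt j)))"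

end

theory Submission
  imports Defs
begin


section \<open>Matrix algebra\<close>

lemma mm_add_rdistrib: "((A::'a::semiring_1^'n^'m) + B) ** C = A ** C + B ** C"
  by (vector matrix_matrix_mult_def sum.distrib[symmetric] field_simps)
lemma mm_sub_ldistrib: "(A::'a::ring_1^'n^'m) ** (B - C) = A ** B - A ** C"
  by (vector matrix_matrix_mult_def sum_subtractf[symmetric] field_simps)
lemma mm_sub_rdistrib: "((A::'a::ring_1^'n^'m) - B) ** C = A ** C - B ** C"
  by (vector matrix_matrix_mult_def sum_subtractf[symmetric] field_simps)
lemma mm_uminus_left: "(- (A::'a::ring_1^'n^'m)) ** B = - (A ** B)"
  by (vector matrix_matrix_mult_def sum_negf[symmetric])
lemma mm_uminus_right: "(A::'a::ring_1^'n^'m) ** (- B) = - (A ** B)"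
  by (vector matrix_matrix_mult_def sum_negf[symmetric])
lemma mm_entry: "((A::'a::semiring_1^'n^'m) ** B) $ i $ j = (\<Sum>k\<in>UNIV. A $ i $ k * B $ k $ j)"
  by (simp add: matrix_matrix_mult_def)

lemma inv_unique:
  fixes A B :: "real^'n^'n"
  assumes "A ** B = mat 1"
  shows "matrix_inv A = B" "B ** A = mat 1" "invertible A"
proof -
  have BA: "B ** A = mat 1" using assms matrix_left_right_inverse by blast
  then have ex: "\<exists>A'. A ** A' = mat 1 \<and> A' ** A = mat 1" using assms by blast
  have s: "A ** matrix_inv A = mat 1 \<and> matrix_inv A ** A = mat 1"
    unfolding matrix_inv_def by (rule someI_ex[OF ex])
  have "matrix_inv A = matrix_inv A ** (A ** B)" using assms by simp
  also have "\<dots> = B" using s by (simp add: matrix_mul_assoc)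
  finally show "matrix_inv A = B" .
  show "B ** A = mat 1" by (rule BA)
  show "invertible A" using ex invertible_def by blast
qed

section \<open>Graph facts\<close>

definition hgt :: "('q \<times> 'q) set \<Rightarrow> 'q \<Rightarrow> nat" where
  "hgt E i = card {a. (a, i) \<in> E\<^sup>+}"

lemma hgt_edge:
  fixes E :: "('q::finite \<times> 'q) set"
  assumes ac: "acyclic E" and e: "(b, i) \<in> E"
  shows "hgt E b < hgt E i"
proof -
  have "{a. (a, b) \<in> E\<^sup>+} \<subset> {a. (a, i) \<in> E\<^sup>+}"
  proof
    show "{a. (a, b) \<in> E\<^sup>+} \<subseteq> {a. (a, i) \<in> E\<^sup>+}" using e by (auto intro: trancl_into_trancl)
    have "b \<in> {a. (a, i) \<in> E\<^sup>+}" using e by auto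
    moreover have "b \<notin> {a. (a, b) \<in> E\<^sup>+}" using ac by (auto simp: acyclic_def)
    ultimately show "{a. (a, b) \<in> E\<^sup>+} \<noteq> {a. (a, i) \<in> E\<^sup>+}" by blast
  qed
  then show ?thesis unfolding hgt_def by (simp add: psubset_card_mono)
qed

lemma hgt_less:
  fixes E :: "('q::finite \<times> 'q) set"
  assumes ac: "acyclic E"
  shows "hgt E i < CARD('q)"
proof -
  have "{a. (a, i) \<in> E\<^sup>+} \<subseteq> UNIV - {i}" using ac by (auto simp: acyclic_def)
  then have "hgt E i \<le> card (UNIV - {i} :: 'q set)" unfolding hgt_def by (intro card_mono) auto
  also have "\<dots> < CARD('q)" by (simp add: card_Diff_subset)
  finally show ?thesis .
qed

lemma hgt_relpow:
  fixes E :: "('q::finite \<times> 'q) set"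
  assumes ac: "acyclic E"
  shows "(j, i) \<in> E ^^ n \<Longrightarrow> hgt E j + n \<le> hgt E i"
proof (induction n arbitrary: i)
  case 0 then show ?case by simp
next
  case (Suc n)
  then obtain b where "(j, b) \<in> E ^^ n" "(b, i) \<in> E" by auto
  then show ?case using Suc.IH hgt_edge[OF ac] by fastforce
qed

lemma relpow_empty:
  fixes E :: "('q::finite \<times> 'q) set"
  assumes ac: "acyclic E" and n: "CARD('q) \<le> n"
  shows "(j, i) \<notin> E ^^ n"
  using hgt_relpow[OF ac, of j i n] hgt_less[OF ac, of i] n by linarith

section \<open>Powers and the inverse\<close>

fun mpow :: "real^'n^'n \<Rightarrow> nat \<Rightarrow> real^'n^'n" where
  "mpow L 0 = mat 1"
| "mpow L (Suc n) = L ** mpow L n"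

definition Npoly :: "real^'n^'n \<Rightarrow> real^'n^'n" where
  "Npoly L = (\<Sum>n<CARD('n). mpow L n)"

lemma mpow_supp:
  fixes E :: "('q::finite \<times> 'q) set"
  assumes es: "edge_supported E L"
  shows "mpow L n $ i $ j \<noteq> 0 \<Longrightarrow> (j, i) \<in> E ^^ n"
proof (induction n arbitrary: i)
  case 0 then show ?case by (auto simp: mat_def split: if_splits)
next
  case (Suc n)
  then obtain m where "L $ i $ m * mpow L n $ m $ j \<noteq> 0"
    using sum.neutral[of UNIV "\<lambda>k. L $ i $ k * mpow L n $ k $ j"] by (auto simp: mm_entry)
  then have "L $ i $ m \<noteq> 0" "mpow L n $ m $ j \<noteq> 0" by auto
  then have "(m, i) \<in> E" "(j, m) \<in> E ^^ n" using es Suc.IH unfolding edge_supported_def by blast+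
  then show ?case by auto
qed

lemma mpow_zero:
  fixes E :: "('q::finite \<times> 'q) set"
  assumes ac: "acyclic E" and es: "edge_supported E L" and n: "CARD('q) \<le> n"
  shows "mpow L n = 0"
  using mpow_supp[OF es] relpow_empty[OF ac n] by (vector) blast

lemma tele: "(mat 1 - L) ** (\<Sum>n<N. mpow L n) = mat 1 - mpow L N"
proof (induction N)
  case 0 then show ?case by simp
next
  case (Suc N)
  have "(mat 1 - L) ** (\<Sum>n<Suc N. mpow L n) = (mat 1 - L) ** (\<Sum>n<N. mpow L n) + (mat 1 - L) ** mpow L N"
    by (simp add: matrix_add_ldistrib)
  also have "\<dots> = mat 1 - mpow L (Suc N)" using Suc by (simp add: mm_sub_rdistrib)
  finally show ?case .
qed

lemma Npoly_inv:
  fixes E :: "('q::finite \<times> 'q) set" and L :: "real^'q^'q"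
  assumes ac: "acyclic E" and es: "edge_supported E L"
  shows "(mat 1 - L) ** Npoly L = mat 1" "Npoly L ** (mat 1 - L) = mat 1"
    "matrix_inv (mat 1 - L) = Npoly L" "invertible (mat 1 - L)"
proof -
  show 1: "(mat 1 - L) ** Npoly L = mat 1"
    unfolding Npoly_def tele using mpow_zero[OF ac es, of "CARD('q)"] by simp
  show "Npoly L ** (mat 1 - L) = mat 1" "matrix_inv (mat 1 - L) = Npoly L" "invertible (mat 1 - L)"
    using inv_unique[OF 1] by auto
qed

lemma Npoly_supp:
  fixes E :: "('q::finite \<times> 'q) set" and L :: "real^'q^'q"
  assumes es: "edge_supported E L"
  shows "Npoly L $ i $ j \<noteq> 0 \<Longrightarrow> (j, i) \<in> E\<^sup>*"
proof -
  assume "Npoly L $ i $ j \<noteq> 0"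
  then obtain n where "mpow L n $ i $ j \<noteq> 0"
  proof -
    assume h: "Npoly L $ i $ j \<noteq> 0" and t: "\<And>n. mpow L n $ i $ j \<noteq> 0 \<Longrightarrow> thesis"
    show thesis
    proof (rule ccontr)
      assume "\<not> thesis"
      then have "\<forall>n. mpow L n $ i $ j = 0" using t by blast
      then have "Npoly L $ i $ j = 0" unfolding Npoly_def by (simp add: sum_component)
      then show False using h by simp
    qed
  qed
  then show ?thesis using mpow_supp[OF es] relpow_imp_rtrancl by blast
qed


lemma subspace_orth_set:
  fixes K S :: "'a::euclidean_space set"
  assumes "subspace S"
  shows "subspace {y \<in> S. \<forall>x\<in>K. orthogonal x y}"
  using assms unfolding subspace_def
  by (auto simp: orthogonal_clauses)

lemma rank_nullity_sub:
  fixes f :: "'a::euclidean_space \<Rightarrow> 'b::euclidean_space"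
  assumes lf: "linear f" and S: "subspace S"
  shows "dim {x\<in>S. f x = 0} + dim (f ` S) = dim S"
proof -
  define K where "K = {x\<in>S. f x = 0}"
  define T where "T = {y \<in> S. \<forall>x\<in>K. orthogonal x y}"
  have sK: "subspace K" unfolding K_def
    using S unfolding subspace_def by (auto simp: linear_0[OF lf] linear_add[OF lf] linear_scale[OF lf])
  have sT: "subspace T" unfolding T_def by (rule subspace_orth_set[OF S])
  have KS: "K \<subseteq> S" unfolding K_def by auto
  have TS: "T \<subseteq> S" unfolding T_def by auto
  have d1: "dim T + dim K = dim S"
    using dim_subspace_orthogonal_to_vectors[OF sK S KS] unfolding T_def by simp
  have img: "f ` S = f ` T"
  proof
    show "f ` T \<subseteq> f ` S" using TS by auto
    show "f ` S \<subseteq> f ` T"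
    proof
      fix w assume "w \<in> f ` S"
      then obtain s where s: "s \<in> S" "w = f s" by auto
      obtain y z where yz: "y \<in> span K" "\<And>u. u \<in> span K \<Longrightarrow> orthogonal z u" "s = y + z"
        using orthogonal_subspace_decomp_exists by blast
      have yK: "y \<in> K" using yz(1) sK by (metis span_eq_iff)
      then have "y \<in> S" "f y = 0" unfolding K_def by auto
      have "z = s - y" using yz(3) by simp
      then have zS: "z \<in> S" using subspace_diff[OF S s(1) \<open>y \<in> S\<close>] by simp
      have "\<forall>x\<in>K. orthogonal x z"
      proof
        fix x assume "x \<in> K"
        then have "orthogonal z x" using yz(2) span_base by blast
        then show "orthogonal x z" by (simp add: orthogonal_commute)
      qed
      then have "z \<in> T" unfolding T_def using zS by simp
      moreover have "w = f z" using s yz(3) \<open>f y = 0\<close> linear_add[OF lf] by simp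
      ultimately show "w \<in> f ` T" by auto
    qed
  qed
  have inj: "inj_on f (span T)"
  proof -
    have "span T = T" using sT by (metis span_eq_iff)
    moreover have "inj_on f T"
    proof (rule inj_onI)
      fix a b assume ab: "a \<in> T" "b \<in> T" "f a = f b"
      have "a - b \<in> T" using ab sT by (simp add: subspace_diff)
      moreover have "f (a - b) = 0" using ab linear_diff[OF lf] by simp
      ultimately have "a - b \<in> K" unfolding K_def T_def by auto
      with \<open>a - b \<in> T\<close> have "orthogonal (a - b) (a - b)" unfolding T_def by auto
      then show "a = b" by (simp add: orthogonal_def)
    qed
    ultimately show ?thesis by metis
  qed
  have "dim (f ` T) = dim T" by (rule dim_image_eq[OF lf inj])
  then show ?thesis using d1 img K_def by simp
qed

definition prodsub :: "('n::finite \<Rightarrow> (real^'m) set) \<Rightarrow> 'n set \<Rightarrow> (real^'m^'n) set" where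
  "prodsub S I = {T. \<forall>i. T $ i \<in> (if i \<in> I then S i else {0})}"

lemma subspace_prodsub:
  fixes S :: "'n::finite \<Rightarrow> (real^'m) set" and I :: "'n set"
  assumes sS: "\<And>i. subspace (S i)"
  shows "subspace (prodsub S I)"
proof (rule subspaceI)
  show "0 \<in> prodsub S I" unfolding prodsub_def using subspace_0[OF sS] by simp
next
  fix x y assume xy: "x \<in> prodsub S I" "y \<in> prodsub S I"
  show "x + y \<in> prodsub S I" unfolding prodsub_def
  proof (intro CollectI allI)
    fix i
    have "x $ i \<in> (if i \<in> I then S i else {0})" "y $ i \<in> (if i \<in> I then S i else {0})"
      using xy unfolding prodsub_def by blast+
    then show "(x + y) $ i \<in> (if i \<in> I then S i else {0})"
      using subspace_add[OF sS] by (cases "i \<in> I") auto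
  qed
next
  fix c x assume x: "x \<in> prodsub S I"
  show "c *\<^sub>R x \<in> prodsub S I" unfolding prodsub_def
  proof (intro CollectI allI)
    fix i
    have "x $ i \<in> (if i \<in> I then S i else {0})"
      using x unfolding prodsub_def by blast
    then show "(c *\<^sub>R x) $ i \<in> (if i \<in> I then S i else {0})"
      using subspace_mul[OF sS] by (cases "i \<in> I") auto
  qed
qed

definition embrow :: "'n::finite \<Rightarrow> real^'m \<Rightarrow> real^'m^'n" where
  "embrow a v = (\<chi> j. if j = a then v else 0)"

lemma linear_embrow: "linear (embrow a)"
  by (auto simp: linear_iff embrow_def vec_eq_iff)

lemma inj_embrow: "inj (embrow a)"
proof (rule injI)
  fix x y assume "embrow a x = embrow a y"
  then have "embrow a x $ a = embrow a y $ a" by simp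
  then show "x = y" by (simp add: embrow_def)
qed

lemma dim_prodsub:
  fixes S :: "'n::finite \<Rightarrow> (real^'m) set" and I :: "'n set"
  assumes sS: "\<And>i. subspace (S i)"
  shows "dim (prodsub S I) = (\<Sum>i\<in>I. dim (S i))"
proof -
  have "finite I" by simp
  then show ?thesis
  proof (induction I rule: finite_induct)
    case empty
    have "prodsub S {} = {0}" unfolding prodsub_def by (auto simp: vec_eq_iff)
    then show ?case by simp
  next
    case (insert a I)
    have single: "prodsub S {a} = embrow a ` S a"
    proof
      show "prodsub S {a} \<subseteq> embrow a ` S a"
      proof
        fix T assume T: "T \<in> prodsub S {a}"
        have Ti: "T $ i \<in> (if i \<in> {a} then S i else {0})" for i
          using T unfolding prodsub_def by blast
        have "T $ j = embrow a (T $ a) $ j" for j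
          using Ti[of j] unfolding embrow_def by (cases "j = a") auto
        then have "T = embrow a (T $ a)" by (simp add: vec_eq_iff)
        moreover have "T $ a \<in> S a" using Ti[of a] by simp
        ultimately show "T \<in> embrow a ` S a" by blast
      qed
      show "embrow a ` S a \<subseteq> prodsub S {a}"
      proof
        fix T assume "T \<in> embrow a ` S a"
        then obtain v where v: "v \<in> S a" "T = embrow a v" by blast
        have "T $ i \<in> (if i \<in> {a} then S i else {0})" for i
          using v unfolding embrow_def by (cases "i = a") auto
        then show "T \<in> prodsub S {a}" unfolding prodsub_def by blast
      qed
    qed
    have dsingle: "dim (prodsub S {a}) = dim (S a)"
      unfolding single by (rule dim_image_eq[OF linear_embrow]) (meson inj_embrow inj_on_subset subset_UNIV)
    have sum: "prodsub S (insert a I) = {x + y |x y. x \<in> prodsub S I \<and> y \<in> prodsub S {a}}"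
    proof
      show "prodsub S (insert a I) \<subseteq> {x + y |x y. x \<in> prodsub S I \<and> y \<in> prodsub S {a}}"
      proof
        fix T assume T: "T \<in> prodsub S (insert a I)"
        define x where "x = (\<chi> j. if j = a then 0 else T $ j)"
        define y where "y = (\<chi> j. if j = a then T $ a else 0)"
        have Txy: "T = x + y" unfolding x_def y_def by (auto simp: vec_eq_iff)
        have Ti: "T $ i \<in> (if i \<in> insert a I then S i else {0})" for i
          using T unfolding prodsub_def by blast
        have "x $ i \<in> (if i \<in> I then S i else {0})" for i
        proof (cases "i = a")
          case True then show ?thesis using insert(2) subspace_0[OF sS] unfolding x_def by simp
        next
          case False then show ?thesis using Ti[of i] unfolding x_def by simp
        qed
        moreover have "x \<in> prodsub S I" using calculation unfolding prodsub_def by blast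
        moreover have "y \<in> prodsub S {a}"
        proof -
          have "y $ i \<in> (if i \<in> {a} then S i else {0})" for i
            using Ti[of a] unfolding y_def by (cases "i = a") auto
          then show ?thesis unfolding prodsub_def by blast
        qed
        ultimately show "T \<in> {x + y |x y. x \<in> prodsub S I \<and> y \<in> prodsub S {a}}" using Txy by blast
      qed
      show "{x + y |x y. x \<in> prodsub S I \<and> y \<in> prodsub S {a}} \<subseteq> prodsub S (insert a I)"
      proof
        fix T assume "T \<in> {x + y |x y. x \<in> prodsub S I \<and> y \<in> prodsub S {a}}"
        then obtain x y where xy: "T = x + y" "x \<in> prodsub S I" "y \<in> prodsub S {a}" by blast
        have X: "x $ i \<in> (if i \<in> I then S i else {0})" for i using xy(2) unfolding prodsub_def by blast
        have Y: "y $ i \<in> (if i \<in> {a} then S i else {0})" for i using xy(3) unfolding prodsub_def by blast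
        have "T $ i \<in> (if i \<in> insert a I then S i else {0})" for i
        proof (cases "i = a")
          case True
          then have "x $ i = 0" "y $ i \<in> S i" using X[of i] Y[of i] insert(2) by auto
          then show ?thesis using xy(1) True by simp
        next
          case False
          then have "y $ i = 0" "x $ i \<in> (if i \<in> I then S i else {0})" using X[of i] Y[of i] by auto
          then show ?thesis using xy(1) False by auto
        qed
        then show "T \<in> prodsub S (insert a I)" unfolding prodsub_def by blast
      qed
    qed
    have int: "prodsub S I \<inter> prodsub S {a} = {0}"
    proof -
      have "T = 0" if T: "T \<in> prodsub S I" "T \<in> prodsub S {a}" for T
      proof -
        have "T $ i = 0" for i
        proof (cases "i = a")
          case True
          then have "i \<notin> I" using insert(2) by simp
          moreover have "T $ i \<in> (if i \<in> I then S i else {0})" using T(1) unfolding prodsub_def by blast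
          ultimately show ?thesis by simp
        next
          case False
          moreover have "T $ i \<in> (if i \<in> {a} then S i else {0})" using T(2) unfolding prodsub_def by blast
          ultimately show ?thesis by simp
        qed
        then show ?thesis by (simp add: vec_eq_iff)
      qed
      moreover have "0 \<in> prodsub S I" "0 \<in> prodsub S {a}"
        using subspace_0[OF subspace_prodsub[of S, OF sS]] by blast+
      ultimately show ?thesis by blast
    qed
    have "dim (prodsub S (insert a I)) + dim (prodsub S I \<inter> prodsub S {a}) = dim (prodsub S I) + dim (prodsub S {a})"
      unfolding sum by (rule dim_sums_Int[OF subspace_prodsub[OF sS] subspace_prodsub[OF sS]])
    then have "dim (prodsub S (insert a I)) = dim (prodsub S I) + dim (S a)" using int dsingle by simp
    then show ?case using insert(1,2,3) by simp
  qed
qed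

lemma dim_prodsub_UNIV:
  fixes S :: "'n::finite \<Rightarrow> (real^'m) set"
  assumes sS: "\<And>i. subspace (S i)"
  shows "dim {T. \<forall>i. T $ i \<in> S i} = (\<Sum>i\<in>UNIV. dim (S i))"
  using dim_prodsub[OF sS, where I=UNIV] unfolding prodsub_def by simp



definition Ek :: "'q::finite \<Rightarrow> real^'q^'q" where
  "Ek k = (\<chi> i j. if i = k \<and> j = k then 1 else 0)"

lemma Ek_right: "(A ** Ek k) $ i $ j = (if j = k then A $ i $ k else 0)"
  by (simp add: mm_entry Ek_def if_distrib if_distribR sum.delta cong: if_cong)
lemma Ek_left: "(Ek k ** A) $ i $ j = (if i = k then A $ k $ j else 0)"
  by (auto simp add: mm_entry Ek_def if_distrib if_distribR sum.delta cong: if_cong)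

lemma lam_int_eq: "lam_int L R k = L + Ek k ** (R - L)"
  by (simp add: lam_int_def vec_eq_iff Ek_left)

locale setting =
  fixes E :: "('q::finite \<times> 'q) set" and L0t Rt :: "real^'q^'q"
  assumes ac: "acyclic E" and esL: "edge_supported E L0t" and esR: "edge_supported E Rt"
begin

definition "X = mat 1 - L0t"
definition "B0 = Npoly L0t"
definition "D = Rt - L0t"
definition "W = D ** B0"
definition "Bk k = B0 + B0 ** Ek k ** W"

lemma XB0: "X ** B0 = mat 1" and B0X: "B0 ** X = mat 1" and invX: "matrix_inv X = B0"
  using Npoly_inv[OF ac esL] unfolding X_def B0_def by auto

lemma B0_supp: "B0 $ m $ j \<noteq> 0 \<Longrightarrow> (j, m) \<in> E\<^sup>*"
  unfolding B0_def using Npoly_supp[OF esL] by blast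

lemma D_supp: "D $ k $ m \<noteq> 0 \<Longrightarrow> (m, k) \<in> E"
  using esL esR unfolding D_def edge_supported_def by force

lemma L_supp: "L0t $ k $ m \<noteq> 0 \<Longrightarrow> (m, k) \<in> E"
  using esL unfolding edge_supported_def by force

lemma W_supp: "W $ k $ j \<noteq> 0 \<Longrightarrow> (j, k) \<in> E\<^sup>+"
proof -
  assume "W $ k $ j \<noteq> 0"
  then obtain m where "D $ k $ m * B0 $ m $ j \<noteq> 0"
    using sum.neutral[of UNIV "\<lambda>m. D $ k $ m * B0 $ m $ j"] unfolding W_def mm_entry by blast
  then have "(m, k) \<in> E" "(j, m) \<in> E\<^sup>*" using D_supp B0_supp by auto
  then show ?thesis by (meson rtrancl_into_trancl1)
qed

lemma no_loop: "(i, i) \<notin> E\<^sup>+"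
  using ac unfolding acyclic_def by blast

lemma W_diag: "W $ k $ k = 0"
  using W_supp no_loop by blast

lemma B0_eq: "B0 = mat 1 + L0t ** B0"
proof -
  have "mat 1 = X ** B0" using XB0 by simp
  also have "\<dots> = B0 - L0t ** B0" unfolding X_def by (simp add: mm_sub_rdistrib)
  finally show ?thesis by simp
qed

lemma B0_diag: "B0 $ k $ k = 1"
proof -
  have "(L0t ** B0) $ k $ k = 0"
  proof -
    have z: "L0t $ k $ m * B0 $ m $ k = 0" for m
    proof (rule ccontr)
      assume a: "L0t $ k $ m * B0 $ m $ k \<noteq> 0"
      then have "L0t $ k $ m \<noteq> 0" by auto
      then have e1: "(m, k) \<in> E" by (rule L_supp)
      from a have "B0 $ m $ k \<noteq> 0" by auto
      then have e2: "(k, m) \<in> E\<^sup>*" by (rule B0_supp)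
      have "(k, k) \<in> E\<^sup>+" using e2 e1 by (rule rtrancl_into_trancl1)
      then show False using no_loop by blast
    qed
    show ?thesis unfolding mm_entry by (simp only: z sum.neutral_const)
  qed
  have "B0 $ k $ k = (mat 1 + L0t ** B0) $ k $ k"
    by (rule arg_cong[where f="\<lambda>M. M $ k $ k", OF B0_eq])
  also have "\<dots> = 1" using \<open>(L0t ** B0) $ k $ k = 0\<close> by (simp add: mat_def)
  finally show ?thesis .
qed

lemma EWE: "Ek k ** W ** Ek k = 0"
  by (simp add: vec_eq_iff Ek_right Ek_left W_diag)

lemma WX: "W ** X = D"
  unfolding W_def by (simp add: matrix_mul_assoc[symmetric] B0X)

lemma W_eq: "W = D + W ** L0t"
proof -
  have "D = W ** X" using WX by simp
  also have "\<dots> = W - W ** L0t" unfolding X_def by (simp add: mm_sub_ldistrib)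
  finally show ?thesis by simp
qed

lemma lamX: "mat 1 - lam_int L0t Rt k = X - Ek k ** D"
  unfolding lam_int_eq X_def D_def by simp

lemma Bk_inv: "(mat 1 - lam_int L0t Rt k) ** Bk k = mat 1"
proof -
  have "(X - Ek k ** D) ** Bk k = X ** B0 + X ** (B0 ** Ek k ** W) - (Ek k ** D) ** B0 - (Ek k ** D) ** (B0 ** Ek k ** W)"
    unfolding Bk_def by (simp add: mm_sub_rdistrib matrix_add_ldistrib)
  also have "X ** (B0 ** Ek k ** W) = Ek k ** W"
    by (simp add: matrix_mul_assoc XB0)
  also have "(Ek k ** D) ** B0 = Ek k ** W"
    by (simp add: matrix_mul_assoc W_def)
  also have "(Ek k ** D) ** (B0 ** Ek k ** W) = (Ek k ** W ** Ek k) ** W"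
    by (simp add: matrix_mul_assoc W_def)
  finally show ?thesis using lamX XB0 EWE by simp
qed

lemma invk: "matrix_inv (mat 1 - lam_int L0t Rt k) = Bk k"
  using inv_unique(1)[OF Bk_inv] .

lemma Delta_eq: "Delta L0t Rt k = B0 ** Ek k ** W"
  unfolding Delta_def invk using invX unfolding X_def Bk_def by simp

lemma Delta_kk: "Delta L0t Rt k $ k $ j = W $ k $ j"
proof -
  have "Delta L0t Rt k $ k $ j = (\<Sum>m\<in>UNIV. (B0 ** Ek k) $ k $ m * W $ m $ j)"
    unfolding Delta_eq by (rule mm_entry)
  also have "\<dots> = (\<Sum>m\<in>UNIV. (if m = k then B0 $ k $ k * W $ m $ j else 0))"
    by (rule sum.cong) (simp_all add: Ek_right)
  also have "\<dots> = W $ k $ j" by (simp add: B0_diag)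
  finally show ?thesis .
qed

end


context setting
begin

lemma ctxB0X: "A ** B0 ** X = A" by (simp add: matrix_mul_assoc[symmetric] B0X)
lemma ctxWX: "A ** W ** X = A ** D" by (simp add: matrix_mul_assoc[symmetric] WX)
lemma ctxEWE: "A ** Ek k ** W ** Ek k = 0"
proof -
  have "A ** Ek k ** W ** Ek k = A ** (Ek k ** W ** Ek k)" by (simp add: matrix_mul_assoc)
  then show ?thesis by (simp add: EWE)
qed

lemmas mmsimps = matrix_add_ldistrib mm_add_rdistrib mm_sub_ldistrib mm_sub_rdistrib matrix_mul_assoc
  mm_uminus_left mm_uminus_right

lemma eq0: "(Ft ** B0) ** (mat 1 - L0) = Ft + (Ft ** B0) ** (L0t - L0)"
proof -
  have "mat 1 - L0 = X + (L0t - L0)" unfolding X_def by simp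
  then show ?thesis by (simp add: mmsimps ctxB0X)
qed

lemma eqk: "(Ft ** Bk k) ** (mat 1 - lam_int L0 R k)
   = Ft + (Ft ** B0) ** (L0t - L0) + (Ft ** B0 ** Ek k) ** (Rt - R - (L0t - L0) + W ** (L0t - L0))"
proof -
  have e1: "mat 1 - lam_int L0 R k = X + (L0t - L0) - Ek k ** (R - L0)" unfolding X_def lam_int_eq by simp
  have "(Ft ** Bk k) ** (X + (L0t - L0) - Ek k ** (R - L0))
   = Ft + (Ft ** B0) ** (L0t - L0) + (Ft ** B0 ** Ek k) ** (Rt - R - (L0t - L0) + W ** (L0t - L0))"
    unfolding Bk_def by (simp add: mmsimps ctxB0X ctxWX ctxEWE D_def algebra_simps)
  then show ?thesis unfolding e1 .
qed

end


lemma es_diff: "edge_supported E A \<Longrightarrow> edge_supported E B \<Longrightarrow> edge_supported E (A - B)"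
  unfolding edge_supported_def by simp
lemma es_add: "edge_supported E A \<Longrightarrow> edge_supported E B \<Longrightarrow> edge_supported E (A + B)"
  unfolding edge_supported_def by simp

lemma Ek_mid: "(A ** Ek k ** Y) $ l $ j = A $ l $ k * Y $ k $ j"
proof -
  have "(A ** Ek k ** Y) $ l $ j = (\<Sum>m\<in>UNIV. (A ** Ek k) $ l $ m * Y $ m $ j)" by (rule mm_entry)
  also have "\<dots> = (\<Sum>m\<in>UNIV. (if m = k then A $ l $ k * Y $ k $ j else 0))"
    by (rule sum.cong) (simp_all add: Ek_right)
  also have "\<dots> = A $ l $ k * Y $ k $ j" by simp
  finally show ?thesis .
qed

context setting
begin

definition "Wi i = {u. (\<forall>j. j \<notin> ch E i \<longrightarrow> u $ j = 0) \<and> M_mat E L0t Rt i *v u = 0}"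
definition "Wt = {T. \<forall>i. T $ i \<in> Wi i}"

lemma mv_in:
  assumes sup: "\<forall>j. j \<notin> ch E i \<longrightarrow> T $ i $ j = 0" and True: "k \<in> de E i - ch E i"
  shows "(M_mat E L0t Rt i *v T $ i) $ k = (W ** transpose T) $ k $ i"
proof -
  have "(M_mat E L0t Rt i *v T $ i) $ k = (\<Sum>l\<in>UNIV. M_mat E L0t Rt i $ k $ l * T $ i $ l)"
    by (simp add: matrix_vector_mult_def)
  also have "\<dots> = (\<Sum>l\<in>UNIV. W $ k $ l * transpose T $ l $ i)"
  proof (rule sum.cong)
    fix l
    show "M_mat E L0t Rt i $ k $ l * T $ i $ l = W $ k $ l * transpose T $ l $ i"
      using True sup[rule_format, of l] by (cases "l \<in> ch E i") (simp_all add: M_mat_def Delta_kk transpose_def)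
  qed simp
  also have "\<dots> = (W ** transpose T) $ k $ i" by (simp add: mm_entry)
  finally show ?thesis .
qed

lemma mv_out:
  assumes False: "k \<notin> de E i - ch E i"
  shows "(M_mat E L0t Rt i *v u) $ k = 0"
proof -
  have z: "M_mat E L0t Rt i $ k $ l = 0" for l
  proof -
    have "\<not> (k \<in> de E i - ch E i \<and> l \<in> ch E i)" using False by blast
    then show ?thesis unfolding M_mat_def by (simp only: vec_lambda_beta if_False)
  qed
  have "(M_mat E L0t Rt i *v u) $ k = (\<Sum>l\<in>UNIV. M_mat E L0t Rt i $ k $ l * u $ l)"
    by (simp add: matrix_vector_mult_def)
  also have "\<dots> = 0" by (simp add: z)
  finally show ?thesis .
qed

lemma out_zero:
  assumes sup: "\<forall>j. j \<notin> ch E i \<longrightarrow> T $ i $ j = 0" and k: "k \<notin> de E i"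
  shows "(W ** transpose T) $ k $ i = 0"
proof -
  have "W $ k $ l * transpose T $ l $ i = 0" for l
  proof (rule ccontr)
    assume a: "W $ k $ l * transpose T $ l $ i \<noteq> 0"
    then have "W $ k $ l \<noteq> 0" by auto
    then have e1: "(l, k) \<in> E\<^sup>+" by (rule W_supp)
    from a have "T $ i $ l \<noteq> 0" by (simp add: transpose_def)
    then have "l \<in> ch E i" using sup by blast
    then have e2: "(i, l) \<in> E" by (simp add: ch_def)
    have "(i, k) \<in> E\<^sup>+" using e2 e1 by (rule trancl_into_trancl2)
    moreover have "k \<noteq> i" using no_loop \<open>(i, k) \<in> E\<^sup>+\<close> by blast
    ultimately have "k \<in> de E i" by (simp add: de_def)
    then show False using k by simp
  qed
  then show ?thesis unfolding mm_entry by (simp only: sum.neutral_const)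
qed

lemma Wt_iff: "T \<in> Wt \<longleftrightarrow> edge_supported E (transpose T) \<and> edge_supported E (W ** transpose T)"
proof -
  have sup_iff: "edge_supported E (transpose T) \<longleftrightarrow> (\<forall>i. \<forall>j. j \<notin> ch E i \<longrightarrow> T $ i $ j = 0)"
    unfolding edge_supported_def ch_def transpose_def by auto
  show ?thesis
  proof
    assume T: "T \<in> Wt"
    then have sup: "\<forall>i. \<forall>j. j \<notin> ch E i \<longrightarrow> T $ i $ j = 0" and M0: "\<forall>i. M_mat E L0t Rt i *v T $ i = 0"
      unfolding Wt_def Wi_def by auto
    have "edge_supported E (W ** transpose T)"
      unfolding edge_supported_def
    proof (intro allI impI)
      fix k i assume ik: "(i, k) \<notin> E"
      show "(W ** transpose T) $ k $ i = 0"
      proof (cases "k \<in> de E i")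
        case True
        then have "k \<in> de E i - ch E i" using ik by (simp add: ch_def)
        then have "(M_mat E L0t Rt i *v T $ i) $ k = (W ** transpose T) $ k $ i"
          using mv_in[of i T k] sup by simp
        then show ?thesis using M0 by simp
      next
        case False
        then show ?thesis using out_zero[of i T k] sup by simp
      qed
    qed
    then show "edge_supported E (transpose T) \<and> edge_supported E (W ** transpose T)"
      using sup sup_iff by simp
  next
    assume a: "edge_supported E (transpose T) \<and> edge_supported E (W ** transpose T)"
    then have sup: "\<forall>i. \<forall>j. j \<notin> ch E i \<longrightarrow> T $ i $ j = 0" using sup_iff by simp
    have "M_mat E L0t Rt i *v T $ i = 0" for i
    proof -
      have "(M_mat E L0t Rt i *v T $ i) $ k = 0" for k
      proof (cases "k \<in> de E i - ch E i")
        case True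
        then have "(i, k) \<notin> E" by (simp add: ch_def)
        then have "(W ** transpose T) $ k $ i = 0" using a unfolding edge_supported_def by blast
        then show ?thesis using mv_in[of i T k] sup True by simp
      next
        case False
        then show ?thesis using mv_out[of k i] by simp
      qed
      then show ?thesis by (simp add: vec_eq_iff)
    qed
    then show "T \<in> Wt" unfolding Wt_def Wi_def using sup by simp
  qed
qed

definition "gmap Ft T = (Ft + (Ft ** B0) ** transpose T, L0t - transpose T, Rt - transpose T + W ** transpose T)"

lemma A0_eq: "A_mat Ft L0t = Ft ** B0"
  unfolding A_mat_def using invX unfolding X_def by simp

lemma Ak_eq: "A_mat Ft (lam_int L0t Rt k) = Ft ** Bk k"
  unfolding A_mat_def invk by simp

lemma var_eq:
  fixes Ft :: "real^'q^'p"
  assumes gen: "\<forall>k. (Ft ** B0) $ l0 $ k \<noteq> 0"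
  shows "ideal_variety E Ft L0t Rt = gmap Ft ` Wt"
proof
  show "ideal_variety E Ft L0t Rt \<subseteq> gmap Ft ` Wt"
  proof
    fix x assume x: "x \<in> ideal_variety E Ft L0t Rt"
    obtain F L0 R where xe: "x = (F, L0, R)" by (cases x) auto
    define U where "U = L0t - L0"
    define Y where "Y = Rt - R - U + W ** U"
    have esL0: "edge_supported E L0" and esR0: "edge_supported E R"
      and F0: "F = A_mat Ft L0t ** (mat 1 - L0)"
      and Fk: "\<And>k. F = A_mat Ft (lam_int L0t Rt k) ** (mat 1 - lam_int L0 R k)"
      using x unfolding xe ideal_variety_def param_space_def by auto
    have F1: "F = Ft + (Ft ** B0) ** U" using F0 unfolding A0_eq U_def eq0 .
    have Y0: "Y = 0"
    proof -
      have "Y $ k $ j = 0" for k j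
      proof -
        have "F = Ft + (Ft ** B0) ** U + (Ft ** B0 ** Ek k) ** Y"
          using Fk[of k] unfolding Ak_eq eqk U_def Y_def .
        then have "(Ft ** B0 ** Ek k) ** Y = 0" using F1 by simp
        then have "((Ft ** B0 ** Ek k) ** Y) $ l0 $ j = 0" by simp
        then have "(Ft ** B0) $ l0 $ k * Y $ k $ j = 0" by (simp only: Ek_mid)
        then show ?thesis using gen by simp
      qed
      then show ?thesis by (simp add: vec_eq_iff)
    qed
    then have R1: "R = Rt - U + W ** U" unfolding Y_def by (simp add: algebra_simps)
    have L1: "L0 = L0t - U" unfolding U_def by simp
    have esU: "edge_supported E U" unfolding U_def by (rule es_diff[OF esL esL0])
    have "W ** U = R - Rt + U" using R1 by simp
    then have esWU: "edge_supported E (W ** U)" using es_add[OF es_diff[OF esR0 esR] esU] by simp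
    have "transpose U \<in> Wt" unfolding Wt_iff using esU esWU by simp
    moreover have "x = gmap Ft (transpose U)" unfolding xe gmap_def using F1 R1 L1 by simp
    ultimately show "x \<in> gmap Ft ` Wt" by blast
  qed
next
  show "gmap Ft ` Wt \<subseteq> ideal_variety E Ft L0t Rt"
  proof
    fix x assume "x \<in> gmap Ft ` Wt"
    then obtain T where T: "T \<in> Wt" "x = gmap Ft T" by blast
    define U where "U = transpose T"
    have esU: "edge_supported E U" and esWU: "edge_supported E (W ** U)" using T(1) unfolding Wt_iff U_def by auto
    define F where "F = Ft + (Ft ** B0) ** U"
    define L0 where "L0 = L0t - U"
    define R where "R = Rt - U + W ** U"
    have xe: "x = (F, L0, R)" unfolding T(2) gmap_def F_def L0_def R_def U_def by simp
    have UL: "L0t - L0 = U" unfolding L0_def by simp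
    have Y0: "Rt - R - U + W ** U = 0" unfolding R_def by simp
    have "(F, L0, R) \<in> param_space E"
      unfolding param_space_def L0_def R_def
      using es_diff[OF esL esU] es_add[OF es_diff[OF esR esU] esWU] by simp
    moreover have "F = A_mat Ft L0t ** (mat 1 - L0)" unfolding A0_eq eq0 UL F_def ..
    moreover have "F = A_mat Ft (lam_int L0t Rt k) ** (mat 1 - lam_int L0 R k)" for k
      unfolding Ak_eq eqk Y0 UL F_def by simp
    ultimately show "x \<in> ideal_variety E Ft L0t Rt" unfolding xe ideal_variety_def by blast
  qed
qed

end


context setting
begin

definition "Sub i = {u::real^'q. \<forall>j. j \<notin> ch E i \<longrightarrow> u $ j = 0}"

lemma subspace_Sub: "subspace (Sub i)"
  by (rule subspaceI) (auto simp: Sub_def)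

lemma dim_Sub: "dim (Sub i) = card (ch E i)"
proof -
  have "vec.dim (Sub i) = card (ch E i)" unfolding Sub_def by (rule dim_substandard_cart)
  then show ?thesis by (simp add: dim_vec_eq)
qed

lemma Wi_eq: "Wi i = {u \<in> Sub i. M_mat E L0t Rt i *v u = 0}"
  unfolding Wi_def Sub_def by simp

lemma subspace_Wi: "subspace (Wi i)"
proof (rule subspaceI)
  show "0 \<in> Wi i" unfolding Wi_def by simp
next
  fix x y assume "x \<in> Wi i" "y \<in> Wi i"
  then show "x + y \<in> Wi i" unfolding Wi_def by (simp add: matrix_vector_right_distrib)
next
  fix c x assume "x \<in> Wi i"
  then show "c *\<^sub>R x \<in> Wi i" unfolding Wi_def by (simp add: matrix_vector_mult_scaleR)
qed

lemma not_ch_self: "i \<notin> ch E i"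
  using no_loop[of i] unfolding ch_def by auto

lemma M_col: "j \<notin> ch E i \<Longrightarrow> M_mat E L0t Rt i $ k $ j = 0"
  unfolding M_mat_def by simp

lemma M_restrict: "M_mat E L0t Rt i *v x = M_mat E L0t Rt i *v (\<chi> j. if j \<in> ch E i then x $ j else 0)"
proof -
  have "(M_mat E L0t Rt i *v x) $ k = (M_mat E L0t Rt i *v (\<chi> j. if j \<in> ch E i then x $ j else 0)) $ k" for k
    unfolding matrix_vector_mult_def
    by (simp, rule sum.cong) (auto simp: M_col)
  then show ?thesis by (simp add: vec_eq_iff)
qed

lemma range_M: "(\<lambda>x. M_mat E L0t Rt i *v x) ` Sub i = range (\<lambda>x. M_mat E L0t Rt i *v x)"
proof
  show "range (\<lambda>x. M_mat E L0t Rt i *v x) \<subseteq> (\<lambda>x. M_mat E L0t Rt i *v x) ` Sub i"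
  proof
    fix y assume "y \<in> range (\<lambda>x. M_mat E L0t Rt i *v x)"
    then obtain x where y: "y = M_mat E L0t Rt i *v x" by blast
    have "(\<chi> j. if j \<in> ch E i then x $ j else 0) \<in> Sub i" unfolding Sub_def by simp
    then show "y \<in> (\<lambda>x. M_mat E L0t Rt i *v x) ` Sub i" using y M_restrict by blast
  qed
qed auto

lemma dim_Wi: "dim (Wi i) + rank (M_mat E L0t Rt i) = card (ch E i)"
proof -
  have "dim {x \<in> Sub i. M_mat E L0t Rt i *v x = 0} + dim ((\<lambda>x. M_mat E L0t Rt i *v x) ` Sub i) = dim (Sub i)"
    by (rule rank_nullity_sub[OF matrix_vector_mul_linear subspace_Sub])
  then show ?thesis unfolding Wi_eq[symmetric] range_M rank_dim_range[symmetric] dim_Sub .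
qed

definition "vv i = (\<chi> j. if j \<in> ch E i then L0t $ j $ i else 0)"

lemma Mv: "(M_mat E L0t Rt i *v vv i) $ k = (if k \<in> de E i - ch E i then W $ k $ i else 0)"
proof (cases "k \<in> de E i - ch E i")
  case True
  have "(M_mat E L0t Rt i *v vv i) $ k = (\<Sum>l\<in>UNIV. W $ k $ l * L0t $ l $ i)"
    unfolding matrix_vector_mult_def
  proof (simp, rule sum.cong)
    fix l
    show "M_mat E L0t Rt i $ k $ l * vv i $ l = W $ k $ l * L0t $ l $ i"
    proof (cases "l \<in> ch E i")
      case True
      then show ?thesis using \<open>k \<in> de E i - ch E i\<close> by (simp add: M_mat_def vv_def Delta_kk)
    next
      case False
      then have "L0t $ l $ i = 0" using L_supp unfolding ch_def by blast
      then show ?thesis using False by (simp add: M_mat_def vv_def)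
    qed
  qed simp
  also have "\<dots> = (W ** L0t) $ k $ i" by (simp add: mm_entry)
  also have "\<dots> = W $ k $ i"
  proof -
    have "(i, k) \<notin> E" using True unfolding ch_def by simp
    then have "D $ k $ i = 0" using D_supp by blast
    moreover have "W $ k $ i = D $ k $ i + (W ** L0t) $ k $ i"
      by (rule arg_cong[where f="\<lambda>M. M $ k $ i", OF W_eq, simplified])
    ultimately show ?thesis by simp
  qed
  finally show ?thesis using True by simp
next
  case False
  show ?thesis unfolding if_not_P[OF False] by (rule mv_out[OF False])
qed

lemma Mb_entry: "Mb_mat E L0t Rt i $ k $ l = M_mat E L0t Rt i $ k $ l
   + (if l = i then (if k \<in> de E i - ch E i then W $ k $ i else 0) else 0)"
  using not_ch_self[of i] by (auto simp: Mb_mat_def M_mat_def Delta_kk)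

lemma Mb_mult: "Mb_mat E L0t Rt i *v x = M_mat E L0t Rt i *v (x + x $ i *\<^sub>R vv i)"
proof -
  have "(Mb_mat E L0t Rt i *v x) $ k = (M_mat E L0t Rt i *v x) $ k + x $ i * (M_mat E L0t Rt i *v vv i) $ k" for k
  proof -
    define c where "c = (if k \<in> de E i - ch E i then W $ k $ i else 0)"
    have mb: "Mb_mat E L0t Rt i $ k $ l = M_mat E L0t Rt i $ k $ l + (if l = i then c else 0)" for l
      unfolding c_def by (rule Mb_entry)
    have "(Mb_mat E L0t Rt i *v x) $ k = (\<Sum>l\<in>UNIV. Mb_mat E L0t Rt i $ k $ l * x $ l)"
      by (simp add: matrix_vector_mult_def)
    also have "\<dots> = (\<Sum>l\<in>UNIV. M_mat E L0t Rt i $ k $ l * x $ l + (if l = i then c * x $ i else 0))"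
      by (rule sum.cong) (simp_all add: mb distrib_right)
    also have "\<dots> = (\<Sum>l\<in>UNIV. M_mat E L0t Rt i $ k $ l * x $ l) + c * x $ i"
      by (simp add: sum.distrib)
    also have "\<dots> = (M_mat E L0t Rt i *v x) $ k + x $ i * (M_mat E L0t Rt i *v vv i) $ k"
      unfolding Mv c_def[symmetric] by (simp add: matrix_vector_mult_def)
    finally show ?thesis .
  qed
  then show ?thesis by (simp add: vec_eq_iff matrix_vector_right_distrib matrix_vector_mult_scaleR)
qed

lemma M_from_Mb: "M_mat E L0t Rt i *v x = Mb_mat E L0t Rt i *v (\<chi> j. if j = i then 0 else x $ j)"
proof -
  have "(M_mat E L0t Rt i *v x) $ k = (Mb_mat E L0t Rt i *v (\<chi> j. if j = i then 0 else x $ j)) $ k" for k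
    unfolding matrix_vector_mult_def
    by (simp, rule sum.cong) (auto simp: Mb_entry M_col not_ch_self)
  then show ?thesis by (simp add: vec_eq_iff)
qed

lemma rank_eq: "rank (Mb_mat E L0t Rt i) = rank (M_mat E L0t Rt i)"
proof -
  have "range (\<lambda>x. Mb_mat E L0t Rt i *v x) = range (\<lambda>x. M_mat E L0t Rt i *v x)"
  proof
    show "range (\<lambda>x. Mb_mat E L0t Rt i *v x) \<subseteq> range (\<lambda>x. M_mat E L0t Rt i *v x)"
      using Mb_mult by auto
    show "range (\<lambda>x. M_mat E L0t Rt i *v x) \<subseteq> range (\<lambda>x. Mb_mat E L0t Rt i *v x)"
      using M_from_Mb by auto
  qed
  then show ?thesis by (simp add: rank_dim_range)
qed

lemma c_val_eq: "c_val E L0t Rt i = int (dim (Wi i))"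
  unfolding c_val_def using rank_eq[of i] dim_Wi[of i] by simp

end


lemma transpose_add: "transpose (A + B) = transpose A + transpose (B::real^'n^'m)"
  by (simp add: vec_eq_iff transpose_def)

context setting
begin

definition "hmap (Ft::real^'q^'p) T = ((Ft ** B0) ** transpose T, - transpose T, - transpose T + W ** transpose T)"

lemma linear_hmap:
  fixes Ft :: "real^'q^'p"
  shows "linear (hmap Ft)"
  by (rule linearI) (simp_all add: hmap_def transpose_add matrix_add_ldistrib algebra_simps transpose_scalar matrix_scalar_ac scaleR_add_right scalar_matrix_assoc)

lemma inj_hmap:
  fixes Ft :: "real^'q^'p"
  shows "inj (hmap Ft)"
proof (rule injI)
  fix x y assume "hmap Ft x = hmap Ft y"
  then have "- transpose x = - transpose y" unfolding hmap_def by simp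
  then show "x = y" by simp
qed

lemma gmap_hmap: "gmap Ft T = (Ft, L0t, Rt) + hmap Ft T"
  unfolding gmap_def hmap_def by (simp add: algebra_simps)

lemma subspace_Wt: "subspace Wt"
proof -
  have "Wt = {T. \<forall>i. T $ i \<in> Wi i}" by (simp add: Wt_def)
  also have "\<dots> = prodsub Wi UNIV" by (simp add: prodsub_def)
  finally show ?thesis using subspace_prodsub[OF subspace_Wi] by simp
qed

lemma dim_Wt: "dim Wt = (\<Sum>i\<in>UNIV. dim (Wi i))"
  unfolding Wt_def by (rule dim_prodsub_UNIV[OF subspace_Wi])

lemma main_dim:
  fixes Ft :: "real^'q^'p"
  assumes gen: "\<forall>k. (Ft ** B0) $ l0 $ k \<noteq> 0"
  shows "aff_dim (ideal_variety E Ft L0t Rt) = (\<Sum>j\<in>UNIV. c_val E L0t Rt j)"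
    and "\<forall>j. c_val E L0t Rt j \<noteq> -1"
proof -
  have "ideal_variety E Ft L0t Rt = gmap Ft ` Wt" by (rule var_eq[OF gen])
  also have "\<dots> = (+) (Ft, L0t, Rt) ` (hmap Ft ` Wt)" by (auto simp: gmap_hmap image_iff)
  finally have "aff_dim (ideal_variety E Ft L0t Rt) = aff_dim (hmap Ft ` Wt)"
    by (simp add: aff_dim_translation_eq)
  also have "\<dots> = int (dim (hmap Ft ` Wt))"
    by (rule aff_dim_subspace[OF linear_subspace_image[OF linear_hmap subspace_Wt]])
  also have "dim (hmap Ft ` Wt) = dim Wt"
    by (rule dim_image_eq[OF linear_hmap]) (meson inj_hmap inj_on_subset subset_UNIV)
  also have "int (dim Wt) = (\<Sum>j\<in>UNIV. c_val E L0t Rt j)"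
    unfolding dim_Wt c_val_eq by simp
  finally show "aff_dim (ideal_variety E Ft L0t Rt) = (\<Sum>j\<in>UNIV. c_val E L0t Rt j)" .
  show "\<forall>j. c_val E L0t Rt j \<noteq> -1" unfolding c_val_eq by simp
qed

end

section \<open>Polynomials\<close>

lemma pf_sum: "finite S \<Longrightarrow> (\<And>i. i \<in> S \<Longrightarrow> poly_fun (f i)) \<Longrightarrow> poly_fun (\<lambda>x. \<Sum>i\<in>S. f i x)"
proof (induction S rule: finite_induct)
  case empty then show ?case using pf_const[of 0] by simp
next
  case (insert a S)
  then show ?case by (simp add: pf_add)
qed

lemma pf_prod: "finite S \<Longrightarrow> (\<And>i. i \<in> S \<Longrightarrow> poly_fun (f i)) \<Longrightarrow> poly_fun (\<lambda>x. \<Prod>i\<in>S. f i x)"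
proof (induction S rule: finite_induct)
  case empty then show ?case using pf_const[of 1] by simp
next
  case (insert a S)
  then show ?case by (simp add: pf_mult)
qed

type_synonym ('p, 'q) pspace = "(real^'q^'p) \<times> (real^'q^'q) \<times> (real^'q^'q)"

lemma pf_c1: "poly_fun (\<lambda>x::('p::finite, 'q::finite) pspace. fst x $ l $ m)"
proof -
  have "(\<lambda>x::('p, 'q) pspace. fst x $ l $ m) = (\<lambda>x. inner (axis l (axis m (1::real)), 0::(real^'q^'q) \<times> (real^'q^'q)) x)"
    by (auto simp: inner_prod_def inner_axis' fun_eq_iff)
  then show ?thesis using pf_lin by metis
qed

lemma pf_c2: "poly_fun (\<lambda>x::('p::finite, 'q::finite) pspace. fst (snd x) $ l $ m)"
proof -
  have "(\<lambda>x::('p, 'q) pspace. fst (snd x) $ l $ m) = (\<lambda>x. inner (0::real^'q^'p, axis l (axis m (1::real)), 0::real^'q^'q) x)"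
    by (auto simp: inner_prod_def inner_axis' fun_eq_iff)
  then show ?thesis using pf_lin by metis
qed

lemma pf_mm:
  fixes F :: "'x::euclidean_space \<Rightarrow> real^'n^'m" and G :: "'x \<Rightarrow> real^'k^'n"
  assumes "\<And>a b. poly_fun (\<lambda>x. F x $ a $ b)" "\<And>a b. poly_fun (\<lambda>x. G x $ a $ b)"
  shows "poly_fun (\<lambda>x. (F x ** G x) $ a $ b)"
  unfolding mm_entry by (rule pf_sum) (auto intro: pf_mult assms)

lemma pf_mpow:
  fixes L :: "'x::euclidean_space \<Rightarrow> real^'n^'n"
  assumes "\<And>a b. poly_fun (\<lambda>x. L x $ a $ b)"
  shows "poly_fun (\<lambda>x. mpow (L x) n $ a $ b)"
proof (induction n arbitrary: a b)
  case 0 then show ?case using pf_const[of "mat 1 $ a $ b"] by simp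
next
  case (Suc n)
  show ?case by (simp only: mpow.simps) (rule pf_mm[OF assms Suc])
qed

lemma pf_Npoly:
  fixes L :: "'x::euclidean_space \<Rightarrow> real^'n^'n"
  assumes "\<And>a b. poly_fun (\<lambda>x. L x $ a $ b)"
  shows "poly_fun (\<lambda>x. Npoly (L x) $ a $ b)"
  unfolding Npoly_def sum_component by (rule pf_sum) (auto intro: pf_mpow assms)

definition Pgen :: "'p \<Rightarrow> ('p::finite, 'q::finite) pspace \<Rightarrow> real" where
  "Pgen l0 x = (\<Prod>k\<in>UNIV. (fst x ** Npoly (fst (snd x))) $ l0 $ k)"

lemma pf_Pgen:
  fixes l0 :: "'p::finite"
  shows "poly_fun (Pgen l0 :: ('p, 'q::finite) pspace \<Rightarrow> real)"
proof -
  have "poly_fun (\<lambda>x::('p::finite, 'q::finite) pspace. \<Prod>k\<in>UNIV. (fst x ** Npoly (fst (snd x))) $ l0 $ k)"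
    by (rule pf_prod) (auto intro!: pf_mm pf_c1 pf_Npoly pf_c2)
  then show ?thesis unfolding Pgen_def[abs_def] .
qed

lemma Npoly_zero: "Npoly (0::real^'n^'n) = mat 1"
proof -
  have "(\<Sum>n<CARD('n). mpow (0::real^'n^'n) n) = (\<Sum>n\<in>{0::nat}. mpow (0::real^'n^'n) n)"
  proof (rule sum.mono_neutral_right)
    show "\<forall>i\<in>{..<CARD('n)} - {0}. mpow (0::real^'n^'n) i = 0"
    proof
      fix i assume "i \<in> {..<CARD('n)} - {0}"
      then obtain j where "i = Suc j" by (cases i) auto
      then show "mpow (0::real^'n^'n) i = 0" by simp
    qed
  qed auto
  then show ?thesis unfolding Npoly_def by simp
qed



theorem proposition3p8:
  fixes E :: "('q::finite \<times> 'q) set"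
  assumes "CARD('p::finite) \<ge> 2" and "CARD('q) \<ge> 2"
    and "acyclic E"
  shows "generically_on (param_space E :: ((real^'q^'p) \<times> (real^'q^'q) \<times> (real^'q^'q)) set)
           (\<lambda>(Ft, L0t, Rt).
              (\<forall>i j. L0t $ i $ j \<noteq> 0 \<longleftrightarrow> (j, i) \<in> E)
            \<and> (\<forall>k j. Rt $ k $ j \<noteq> 0 \<longleftrightarrow> (j, k) \<in> E)
            \<and> (\<forall>k j. (j, k) \<in> E \<longrightarrow> Rt $ k $ j \<noteq> L0t $ k $ j)
            \<longrightarrow> aff_dim (ideal_variety E Ft L0t Rt) =
                  (if \<exists>j. c_val E L0t Rt j = -1 then -1
                   else (\<Sum>j\<in>UNIV. c_val E L0t Rt j)))"
proof -
  define l0 :: 'p where "l0 = undefined"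
  have P1: "poly_fun (Pgen l0 :: ('p, 'q) pspace \<Rightarrow> real)" by (rule pf_Pgen)
  have P2: "\<exists>x\<in>(param_space E :: ('p, 'q) pspace set). Pgen l0 x \<noteq> 0"
  proof
    let ?x = "((\<chi> l j. 1) :: real^'q^'p, 0 :: real^'q^'q, 0 :: real^'q^'q)"
    show "?x \<in> param_space E" unfolding param_space_def edge_supported_def by simp
    have "Pgen l0 ?x = (\<Prod>k\<in>UNIV. ((\<chi> l j. 1) ** (mat 1 :: real^'q^'q)) $ l0 $ k)"
      unfolding Pgen_def by (simp add: Npoly_zero)
    also have "\<dots> = 1" by simp
    finally show "Pgen l0 ?x \<noteq> 0" by simp
  qed
  have P3: "\<forall>x\<in>(param_space E :: ('p, 'q) pspace set). Pgen l0 x \<noteq> 0 \<longrightarrow>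
           (\<lambda>(Ft, L0t, Rt).
              (\<forall>i j. L0t $ i $ j \<noteq> 0 \<longleftrightarrow> (j, i) \<in> E)
            \<and> (\<forall>k j. Rt $ k $ j \<noteq> 0 \<longleftrightarrow> (j, k) \<in> E)
            \<and> (\<forall>k j. (j, k) \<in> E \<longrightarrow> Rt $ k $ j \<noteq> L0t $ k $ j)
            \<longrightarrow> aff_dim (ideal_variety E Ft L0t Rt) =
                  (if \<exists>j. c_val E L0t Rt j = -1 then -1
                   else (\<Sum>j\<in>UNIV. c_val E L0t Rt j))) x"
  proof (intro ballI impI)
    fix x :: "('p, 'q) pspace"
    assume xP: "x \<in> param_space E" and Pnz: "Pgen l0 x \<noteq> 0"
    obtain Ft L0t Rt where xe: "x = (Ft, L0t, Rt)" by (cases x) auto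
    have esL: "edge_supported E L0t" and esR: "edge_supported E Rt"
      using xP unfolding xe param_space_def by auto
    interpret S: setting E L0t Rt
      by (unfold_locales) (fact assms(3), fact esL, fact esR)
    have gen: "\<forall>k. (Ft ** S.B0) $ l0 $ k \<noteq> 0"
      using Pnz unfolding xe Pgen_def S.B0_def by simp
    have m1: "aff_dim (ideal_variety E Ft L0t Rt) = (\<Sum>j\<in>UNIV. c_val E L0t Rt j)"
      and m2: "\<forall>j. c_val E L0t Rt j \<noteq> -1"
      using S.main_dim[OF gen] by auto
    show "(\<lambda>(Ft, L0t, Rt).
              (\<forall>i j. L0t $ i $ j \<noteq> 0 \<longleftrightarrow> (j, i) \<in> E)
            \<and> (\<forall>k j. Rt $ k $ j \<noteq> 0 \<longleftrightarrow> (j, k) \<in> E)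
            \<and> (\<forall>k j. (j, k) \<in> E \<longrightarrow> Rt $ k $ j \<noteq> L0t $ k $ j)
            \<longrightarrow> aff_dim (ideal_variety E Ft L0t Rt) =
                  (if \<exists>j. c_val E L0t Rt j = -1 then -1
                   else (\<Sum>j\<in>UNIV. c_val E L0t Rt j))) x"
      unfolding xe using m1 m2 by simp
  qed
  show ?thesis unfolding generically_on_def using P1 P2 P3 by blast
qed


end
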